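(* There is an absolute constant $a>0$ such that the following holds. Let $X$ be a finite or countable set and let $C\subseteq\{0,1\}^X$ be a concept class with VC dimension $d$, $0<d<\infty$, whose dual class $C^*$ has VC dimension $d^*$, $0<d^*<\infty$. Then $C$ has a sample compression scheme of size at most $k\log_2 k$, where $k=a\,d^*d$.
   Context: A concept class is a set $C\subseteq\{0,1\}^X$ of functions $X\to\{0,1\}$. A set $Y\subseteq X$ is $C$-shattered if for every $Z\subseteq Y$ there is $c\in C$ with $c(x)=1$ for all $x\in Z$ and $c(x)=0$ for all $x\in Y\setminus Z$; the VC dimension of $C$ is the maximum size of a $C$-shattered set. The dual class $C^*\subseteq\{0,1\}^C$ is the set of all functions $f_x:C\to\{0,1\}$, $x\in X$, defined by $f_x(c)=c(x)$. A $C$-labeled sample is a pair $(Y,y)$ where $Y$ is a finite multiset of elements of $X$ and $y=c|_Y$ for some $c\in C$; its size is the size of $Y$ as a multiset. $L_C(k)$ denotes the set of $C$-labeled samples of size at most $k$, and $L_C(\infty)$ the set of all finite $C$-labeled samples. A sample compression scheme for $C$ with kernel size $k$ and side information $I$ ($I$ a finite set) consists of a compression map $\kappa:L_C(\infty)\to L_C(k)\times I$ sending $(Y,y)$ to $((Z,z),i)$ with $Z\subseteq Y$ and $z=y|_Z$, and a reconstruction map $\rho:L_C(k)\times I\to\{0,1\}^X$ such that $\rho(\kappa(Y,y))|_Y=y$ for all $(Y,y)\in L_C(\infty)$. The size of the scheme is $k+\log_2|I|$. *)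

theory Defs
  imports Complex_Main "HOL-Library.Multiset"
begin

text \<open>A concept class over a domain D is a set H of functions 'a => bool;
  only the values on D matter.\<close>

definition shatters :: "'a set \<Rightarrow> ('a \<Rightarrow> bool) set \<Rightarrow> 'a set \<Rightarrow> bool" where
  "shatters D H Y \<longleftrightarrow> Y \<subseteq> D \<and>
     (\<forall>Z\<subseteq>Y. \<exists>c\<in>H. (\<forall>x\<in>Z. c x) \<and> (\<forall>x\<in>Y - Z. \<not> c x))"

definition has_vc_dim :: "'a set \<Rightarrow> ('a \<Rightarrow> bool) set \<Rightarrow> nat \<Rightarrow> bool" where
  "has_vc_dim D H d \<longleftrightarrow>
     (\<exists>Y. shatters D H Y \<and> finite Y \<and> card Y = d) \<and>
     (\<forall>Y. shatters D H Y \<longrightarrow> finite Y \<and> card Y \<le> d)"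

definition dual_class :: "'a set \<Rightarrow> (('a \<Rightarrow> bool) \<Rightarrow> bool) set" where
  "dual_class X = (\<lambda>x c. c x) ` X"

definition labeled_sample :: "'a set \<Rightarrow> ('a \<Rightarrow> bool) set \<Rightarrow> ('a \<times> bool) multiset \<Rightarrow> bool" where
  "labeled_sample X C S \<longleftrightarrow> (\<forall>p\<in>#S. fst p \<in> X) \<and> (\<exists>c\<in>C. \<forall>p\<in>#S. c (fst p) = snd p)"

definition compression_scheme ::
  "'a set \<Rightarrow> ('a \<Rightarrow> bool) set \<Rightarrow> nat \<Rightarrow> 'i set
   \<Rightarrow> (('a \<times> bool) multiset \<Rightarrow> ('a \<times> bool) multiset \<times> 'i)
   \<Rightarrow> (('a \<times> bool) multiset \<Rightarrow> 'i \<Rightarrow> ('a \<Rightarrow> bool)) \<Rightarrow> bool" where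
  "compression_scheme X C k I \<kappa> \<rho> \<longleftrightarrow> finite I \<and>
     (\<forall>S. labeled_sample X C S \<longrightarrow>
        fst (\<kappa> S) \<subseteq># S \<and> size (fst (\<kappa> S)) \<le> k \<and> snd (\<kappa> S) \<in> I \<and>
        (\<forall>p\<in>#S. \<rho> (fst (\<kappa> S)) (snd (\<kappa> S)) (fst p) = snd p))"

end

theory Submission
  imports Defs "HOL-Library.FuncSet"
begin

definition shat :: "'a set set \<Rightarrow> 'a set \<Rightarrow> bool" where
  "shat H S \<longleftrightarrow> (\<forall>Z\<subseteq>S. \<exists>B\<in>H. B \<inter> S = Z)"

lemma pajor:
  assumes "finite P"
  shows "(\<forall>B\<in>H. B \<subseteq> P) \<Longrightarrow> card H \<le> card {S. S \<subseteq> P \<and> shat H S}"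
  using assms
proof (induction P arbitrary: H rule: finite_induct)
  case empty
  then have "H \<subseteq> {{}}" by auto
  show ?case
  proof (cases "H = {}")
    case True then show ?thesis by simp
  next
    case False
    then have "H = {{}}" using \<open>H \<subseteq> {{}}\<close> by auto
    then have "{S. S \<subseteq> {} \<and> shat H S} = {{}}" by (auto simp: shat_def)
    then show ?thesis using \<open>H = {{}}\<close> by simp
  qed
next
  case (insert w P H)
  define H0 where "H0 = {B\<in>H. w \<notin> B}"
  define H1 where "H1 = (\<lambda>B. B - {w}) ` {B\<in>H. w \<in> B}"
  have finH: "finite H"
    by (rule finite_subset[of _ "Pow (insert w P)"]) (use insert in auto)
  have sub0: "\<forall>B\<in>H0. B \<subseteq> P" and sub1: "\<forall>B\<in>H1. B \<subseteq> P"
    using insert.prems by (auto simp: H0_def H1_def)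
  have cH: "card H = card H0 + card {B\<in>H. w \<in> B}"
  proof -
    have "H = H0 \<union> {B\<in>H. w \<in> B}" by (auto simp: H0_def)
    moreover have "H0 \<inter> {B\<in>H. w \<in> B} = {}" by (auto simp: H0_def)
    ultimately show ?thesis using finH
      by (metis (no_types, lifting) card_Un_disjoint finite_Un)
  qed
  have "inj_on (\<lambda>B. B - {w}) {B\<in>H. w \<in> B}"
    by (rule inj_onI) (metis (no_types, lifting) insert_Diff mem_Collect_eq)
  then have c1: "card H1 = card {B\<in>H. w \<in> B}" by (simp add: H1_def card_image)
  have fin01: "finite H0" "finite H1" using finH by (auto simp: H0_def H1_def)
  have "card H = card (H0 \<union> H1) + card (H0 \<inter> H1)"
    using cH c1 card_Un_Int[OF fin01] by simp
  define Sh1 where "Sh1 = {S. S \<subseteq> P \<and> shat (H0 \<union> H1) S}"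
  define Sh2 where "Sh2 = {S. S \<subseteq> P \<and> shat (H0 \<inter> H1) S}"
  have i1: "card (H0 \<union> H1) \<le> card Sh1"
    unfolding Sh1_def by (rule insert.IH) (use sub0 sub1 in auto)
  have i2: "card (H0 \<inter> H1) \<le> card Sh2"
    unfolding Sh2_def by (rule insert.IH) (use sub0 in auto)
  define T where "T = {S. S \<subseteq> insert w P \<and> shat H S}"
  have finT: "finite T" unfolding T_def
    by (rule finite_subset[of _ "Pow (insert w P)"]) (use insert in auto)
  have s1: "Sh1 \<subseteq> T"
  proof
    fix S assume "S \<in> Sh1"
    then have SP: "S \<subseteq> P" and sh: "shat (H0 \<union> H1) S" by (auto simp: Sh1_def)
    have "w \<notin> S" using SP insert.hyps by auto
    have "shat H S" unfolding shat_def
    proof (intro allI impI)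
      fix Z assume "Z \<subseteq> S"
      then obtain B where B: "B \<in> H0 \<union> H1" "B \<inter> S = Z" using sh by (auto simp: shat_def)
      show "\<exists>B\<in>H. B \<inter> S = Z"
      proof (cases "B \<in> H0")
        case True then show ?thesis using B by (auto simp: H0_def)
      next
        case False
        then obtain B' where "B' \<in> H" "B = B' - {w}" using B by (auto simp: H1_def)
        then show ?thesis using B \<open>w \<notin> S\<close> by (intro bexI[of _ B']) auto
      qed
    qed
    then show "S \<in> T" using SP by (auto simp: T_def)
  qed
  have s2: "insert w ` Sh2 \<subseteq> T"
  proof
    fix S' assume "S' \<in> insert w ` Sh2"
    then obtain S where S': "S' = insert w S" and SP: "S \<subseteq> P" and sh: "shat (H0 \<inter> H1) S"
      by (auto simp: Sh2_def)
    have "w \<notin> S" using SP insert.hyps by auto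
    have "shat H (insert w S)" unfolding shat_def
    proof (intro allI impI)
      fix Z assume Z: "Z \<subseteq> insert w S"
      then obtain B where B: "B \<in> H0" "B \<in> H1" "B \<inter> S = Z - {w}"
        using sh unfolding shat_def by (metis Diff_subset_conv IntE insert_is_Un)
      have "B \<in> H" "w \<notin> B" using B by (auto simp: H0_def)
      obtain B' where B': "B' \<in> H" "w \<in> B'" "B = B' - {w}" using B by (auto simp: H1_def)
      have "B' = insert w B" using B' by auto
      show "\<exists>B\<in>H. B \<inter> insert w S = Z"
      proof (cases "w \<in> Z")
        case True
        have "B' \<inter> insert w S = insert w (B \<inter> S)" using \<open>B' = insert w B\<close> by blast
        also have "\<dots> = Z" using B(3) True by blast
        finally show ?thesis using B'(1) by blast
      next
        case False
        then show ?thesis using \<open>B \<in> H\<close> \<open>w \<notin> B\<close> B(3) Z by (intro bexI[of _ B]) auto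
      qed
    qed
    then show "S' \<in> T" using S' SP by (auto simp: T_def)
  qed
  have disj: "Sh1 \<inter> insert w ` Sh2 = {}"
    using insert.hyps by (auto simp: Sh1_def)
  have "inj_on (insert w) Sh2"
  proof (rule inj_onI)
    fix x y assume "x \<in> Sh2" "y \<in> Sh2" "insert w x = insert w y"
    moreover have "w \<notin> x" "w \<notin> y" using \<open>x \<in> Sh2\<close> \<open>y \<in> Sh2\<close> insert.hyps by (auto simp: Sh2_def)
    ultimately show "x = y" by (metis Diff_insert_absorb)
  qed
  then have "card (insert w ` Sh2) = card Sh2" by (simp add: card_image)
  moreover have "finite Sh1" "finite (insert w ` Sh2)"
    using finT s1 s2 finite_subset by blast+
  ultimately have "card Sh1 + card Sh2 = card (Sh1 \<union> insert w ` Sh2)"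
    using disj by (simp add: card_Un_disjoint)
  also have "\<dots> \<le> card T" using s1 s2 finT by (intro card_mono) auto
  finally show ?case
    using i1 i2 \<open>card H = card (H0 \<union> H1) + card (H0 \<inter> H1)\<close> by (simp add: T_def)
qed

lemma sauer:
  assumes "finite P" "\<forall>B\<in>H. B \<subseteq> P" "\<And>S. S \<subseteq> P \<Longrightarrow> shat H S \<Longrightarrow> card S \<le> d"
  shows "card H \<le> (\<Sum>i\<le>d. card P choose i)"
proof -
  have "{S. S \<subseteq> P \<and> shat H S} \<subseteq> (\<Union>i\<le>d. {S. S \<subseteq> P \<and> card S = i})"
    using assms(3) by auto
  then have "card {S. S \<subseteq> P \<and> shat H S} \<le> card (\<Union>i\<le>d. {S. S \<subseteq> P \<and> card S = i})"
    using assms(1) by (intro card_mono) auto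
  also have "\<dots> \<le> (\<Sum>i\<le>d. card {S. S \<subseteq> P \<and> card S = i})"
    by (rule card_UN_le) simp
  also have "\<dots> = (\<Sum>i\<le>d. card P choose i)"
    using n_subsets[OF assms(1)] by simp
  finally show ?thesis using pajor[OF assms(1) assms(2)] by linarith
qed

lemma binom_sum_bound:
  assumes "1 \<le> d" "d \<le> n"
  shows "real (\<Sum>i\<le>d. n choose i) \<le> (3 * real n / real d) ^ d"
proof -
  define x where "x = real d / real n"
  have x0: "0 < x" and x1: "x \<le> 1" using assms by (auto simp: x_def)
  have "x ^ d * real (\<Sum>i\<le>d. n choose i) = (\<Sum>i\<le>d. real (n choose i) * x ^ d)"
    by (simp add: sum_distrib_left mult.commute)
  also have "\<dots> \<le> (\<Sum>i\<le>d. real (n choose i) * x ^ i)"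
    by (intro sum_mono mult_left_mono power_decreasing) (use x0 x1 in auto)
  also have "\<dots> \<le> (\<Sum>i\<le>n. real (n choose i) * x ^ i)"
    by (intro sum_mono2) (use assms x0 in auto)
  also have "\<dots> = (x + 1) ^ n"
    by (simp add: binomial_ring mult.commute)
  also have "\<dots> \<le> exp x ^ n"
    by (intro power_mono) (use x0 in \<open>auto simp: add.commute\<close>)
  also have "\<dots> = exp (real d)"
    using assms by (simp add: x_def flip: exp_of_nat_mult)
  also have "\<dots> = exp 1 ^ d" by (simp flip: exp_of_nat_mult)
  also have "\<dots> \<le> 3 ^ d" by (intro power_mono) (use exp_le in auto)
  finally have "x ^ d * real (\<Sum>i\<le>d. n choose i) \<le> 3 ^ d" .
  then have "real (\<Sum>i\<le>d. n choose i) \<le> 3 ^ d / x ^ d"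
    using x0 by (simp add: field_simps)
  also have "\<dots> = (3 * real n / real d) ^ d"
    by (simp add: x_def power_divide)
  finally show ?thesis .
qed

lemma growth_bound:
  assumes "1 \<le> d" "d \<le> n2" "n \<le> n2"
  shows "real (\<Sum>i\<le>d. n choose i) \<le> (3 * real n2 / real d) ^ d"
proof -
  have "(\<Sum>i\<le>d. n choose i) \<le> (\<Sum>i\<le>d. n2 choose i)"
    by (intro sum_mono binomial_right_mono assms)
  then show ?thesis using binom_sum_bound[OF assms(1,2)]
    by (meson of_nat_le_iff order_trans)
qed

lemma prod_if_pow:
  assumes "finite J"
  shows "(\<Prod>j\<in>J. if P j then c else 1) = (c::'a::comm_monoid_mult) ^ card {j\<in>J. P j}"
  using assms by (simp add: prod.inter_filter[symmetric])

lemma card_filter_sum: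
  assumes "finite J"
  shows "(of_nat (card {j\<in>J. P j}) :: 'a::comm_semiring_1) = (\<Sum>j\<in>J. of_bool (P j))"
  using assms by (simp add: of_bool_def sum.inter_filter[symmetric])

definition cnt :: "nat \<Rightarrow> (nat \<Rightarrow> 'i) \<Rightarrow> 'i set \<Rightarrow> nat" where
  "cnt m u A = card {j\<in>{0..<m}. u j \<in> A}"

lemma sum_pow_cnt:
  assumes "finite \<Omega>0"
  shows "(\<Sum>u\<in>{0..<m} \<rightarrow>\<^sub>E \<Omega>0. (c::real) ^ cnt m u A) = (\<Sum>\<omega>\<in>\<Omega>0. if \<omega> \<in> A then c else 1) ^ m"
proof -
  have "(\<Sum>\<omega>\<in>\<Omega>0. if \<omega> \<in> A then c else 1) ^ m = (\<Prod>j\<in>{0..<m}. \<Sum>\<omega>\<in>\<Omega>0. if \<omega> \<in> A then c else 1)"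
    by simp
  also have "\<dots> = (\<Sum>u\<in>{0..<m} \<rightarrow>\<^sub>E \<Omega>0. \<Prod>j\<in>{0..<m}. if u j \<in> A then c else 1)"
    by (rule prod_sum_PiE) (use assms in auto)
  also have "\<dots> = (\<Sum>u\<in>{0..<m} \<rightarrow>\<^sub>E \<Omega>0. c ^ cnt m u A)"
    by (simp add: prod_if_pow cnt_def)
  finally show ?thesis by simp
qed

lemma ind_card:
  assumes "finite S"
  shows "real (card {x\<in>S. P x}) = (\<Sum>x\<in>S. if P x then 1 else 0)"
  using assms by (simp add: sum.inter_filter[symmetric])

lemma claim1:
  assumes fin: "finite \<Omega>0" and AS: "A \<subseteq> \<Omega>0" and q: "1 \<le> q" and \<beta>: "0 \<le> \<beta>" "\<beta> * real (card \<Omega>0) \<le> real (card A)"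
  shows "real (card {v\<in>{0..<m} \<rightarrow>\<^sub>E \<Omega>0. cnt m v A \<le> k'}) \<le> q^k' * (1 - \<beta>*(1 - 1/q))^m * real (card \<Omega>0) ^ m"
proof -
  let ?Sp = "{0..<m} \<rightarrow>\<^sub>E \<Omega>0"
  define N where "N = real (card \<Omega>0)"
  have finSp: "finite ?Sp" using fin by (simp add: finite_PiE)
  have "real (card {v\<in>?Sp. cnt m v A \<le> k'}) = (\<Sum>v\<in>?Sp. if cnt m v A \<le> k' then 1 else 0)"
    by (rule ind_card[OF finSp])
  also have "\<dots> \<le> (\<Sum>v\<in>?Sp. q^k' * (1/q)^cnt m v A)"
  proof (rule sum_mono)
    fix v
    show "(if cnt m v A \<le> k' then 1 else 0) \<le> q^k' * (1/q)^cnt m v A"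
    proof (cases "cnt m v A \<le> k'")
      case True
      have "q ^ cnt m v A \<le> q ^ k'" by (rule power_increasing[OF True q])
      then have "1 \<le> q^k' / q ^ cnt m v A" using q by simp
      then show ?thesis using True by (simp add: divide_inverse power_inverse)
    next
      case False then show ?thesis using q by simp
    qed
  qed
  also have "\<dots> = q^k' * (\<Sum>v\<in>?Sp. (1/q)^cnt m v A)" by (simp add: sum_distrib_left)
  also have "(\<Sum>v\<in>?Sp. (1/q)^cnt m v A) = (\<Sum>\<omega>\<in>\<Omega>0. if \<omega> \<in> A then 1/q else 1) ^ m"
    by (rule sum_pow_cnt[OF fin])
  also have "(\<Sum>\<omega>\<in>\<Omega>0. if \<omega> \<in> A then 1/q else 1) = real (card A) / q + (N - real (card A))"
  proof -
    have "(\<Sum>\<omega>\<in>\<Omega>0. if \<omega> \<in> A then 1/q else 1) = (\<Sum>\<omega>\<in>A. 1/q) + (\<Sum>\<omega>\<in>\<Omega>0 - A. 1)"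
      using fin AS by (simp add: sum.If_cases Int_absorb1 Diff_eq)
    also have "\<dots> = real (card A) / q + (N - real (card A))"
      using fin AS by (simp add: N_def card_Diff_subset finite_subset of_nat_diff card_mono)
    finally show ?thesis .
  qed
  also have "real (card A) / q + (N - real (card A)) = N - real (card A) * (1 - 1/q)"
    by (simp add: algebra_simps)
  also have "(N - real (card A) * (1 - 1/q)) ^ m \<le> (N * (1 - \<beta>*(1 - 1/q))) ^ m"
  proof (rule power_mono)
    have "0 \<le> 1 - 1/q" using q by simp
    then have "\<beta> * N * (1 - 1/q) \<le> real (card A) * (1 - 1/q)"
      using \<beta> by (intro mult_right_mono) (auto simp: N_def)
    then show "N - real (card A) * (1 - 1/q) \<le> N * (1 - \<beta>*(1 - 1/q))"
      by (simp add: algebra_simps)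
    have "real (card A) \<le> N" using fin AS by (simp add: N_def card_mono)
    moreover have "real (card A) * (1 - 1/q) \<le> real (card A)" using q by (simp add: mult_left_le)
    ultimately show "0 \<le> N - real (card A) * (1 - 1/q)" by linarith
  qed
  finally have "real (card {v\<in>?Sp. cnt m v A \<le> k'}) \<le> q^k' * (N * (1 - \<beta>*(1 - 1/q))) ^ m"
    using q by simp
  then show ?thesis by (simp only: N_def power_mult_distrib mult_ac)
qed

lemma rad:
  assumes q: "1 \<le> q" and e: "\<forall>j. \<bar>e j\<bar> \<le> (1::int)"
  shows "real (card {\<sigma>\<in>{0..<m} \<rightarrow>\<^sub>E (UNIV::bool set). int t \<le> (\<Sum>j\<in>{0..<m}. if \<sigma> j then - e j else e j)})
     \<le> (q + 1/q)^m / q^t"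
proof -
  let ?S = "{0..<m} \<rightarrow>\<^sub>E (UNIV::bool set)"
  define D where "D \<sigma> = (\<Sum>j\<in>{0..<m}. if \<sigma> j then - e j else e j)" for \<sigma>
  define f where "f j b = q powr real_of_int (if b then - e j else e j)" for j b
  have finS: "finite ?S" by (simp add: finite_PiE)
  have q0: "q > 0" using q by simp
  have "real (card {\<sigma>\<in>?S. int t \<le> D \<sigma>}) = (\<Sum>\<sigma>\<in>?S. if int t \<le> D \<sigma> then 1 else 0)"
    by (rule ind_card[OF finS])
  also have "\<dots> \<le> (\<Sum>\<sigma>\<in>?S. q powr (real_of_int (D \<sigma>) - real t))"
  proof (rule sum_mono)
    fix \<sigma> show "(if int t \<le> D \<sigma> then 1 else 0) \<le> q powr (real_of_int (D \<sigma>) - real t)"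
      using q by (auto intro!: ge_one_powr_ge_zero)
  qed
  also have "\<dots> = (\<Sum>\<sigma>\<in>?S. (\<Prod>j\<in>{0..<m}. f j (\<sigma> j))) / q^t"
  proof -
    have "q powr (real_of_int (D \<sigma>) - real t) = (\<Prod>j\<in>{0..<m}. f j (\<sigma> j)) / q^t" for \<sigma>
    proof -
      have "q powr (real_of_int (D \<sigma>) - real t) = q powr real_of_int (D \<sigma>) / q powr real t"
        by (simp add: powr_diff)
      also have "q powr real_of_int (D \<sigma>) = (\<Prod>j\<in>{0..<m}. f j (\<sigma> j))"
        using q0 by (simp add: D_def f_def powr_sum)
      also have "q powr real t = q ^ t" using q0 by (simp add: powr_realpow)
      finally show ?thesis .
    qed
    then show ?thesis by (simp add: sum_divide_distrib)
  qed
  also have "(\<Sum>\<sigma>\<in>?S. (\<Prod>j\<in>{0..<m}. f j (\<sigma> j))) = (\<Prod>j\<in>{0..<m}. \<Sum>b\<in>UNIV. f j b)"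
    by (rule prod_sum_PiE[symmetric]) auto
  also have "\<dots> \<le> (\<Prod>j\<in>{0..<m}. q + 1/q)"
  proof (rule prod_mono)
    fix j
    have "(\<Sum>b\<in>UNIV. f j b) = f j True + f j False" by (simp add: UNIV_bool)
    also have "\<dots> \<le> q + 1/q"
    proof -
      have "e j = -1 \<or> e j = 0 \<or> e j = 1" using e[rule_format, of j] by auto
      moreover have "2 \<le> q + 1/q"
      proof -
        have "0 \<le> (q - 1)^2" by simp
        then have "2 * q \<le> q * q + 1" by (simp add: power2_eq_square algebra_simps)
        then show ?thesis using q0 by (simp add: field_simps)
      qed
      ultimately show ?thesis using q0 by (auto simp: f_def powr_minus_divide)
    qed
    finally show "0 \<le> (\<Sum>b\<in>UNIV. f j b) \<and> (\<Sum>b\<in>UNIV. f j b) \<le> q + 1/q"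
      by (simp add: f_def sum_nonneg)
  qed
  also have "\<dots> = (q + 1/q)^m" by simp
  finally show ?thesis using q0 by (simp add: D_def divide_right_mono)
qed

definition sw :: "(nat \<Rightarrow> bool) \<Rightarrow> (nat \<Rightarrow> 'i) \<times> (nat \<Rightarrow> 'i) \<Rightarrow> (nat \<Rightarrow> 'i) \<times> (nat \<Rightarrow> 'i)" where
  "sw \<sigma> \<omega> = (\<lambda>j. if \<sigma> j then snd \<omega> j else fst \<omega> j, \<lambda>j. if \<sigma> j then fst \<omega> j else snd \<omega> j)"

lemma sw_sw: "sw \<sigma> (sw \<sigma> \<omega>) = \<omega>"
  by (cases \<omega>) (simp add: sw_def fun_eq_iff)

lemma sw_mem:
  assumes "\<omega> \<in> ({0..<m} \<rightarrow>\<^sub>E \<Omega>0) \<times> ({0..<m} \<rightarrow>\<^sub>E \<Omega>0)"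
  shows "sw \<sigma> \<omega> \<in> ({0..<m} \<rightarrow>\<^sub>E \<Omega>0) \<times> ({0..<m} \<rightarrow>\<^sub>E \<Omega>0)"
  using assms by (cases \<omega>) (auto simp: sw_def PiE_iff extensional_def)

lemma sw_bij: "bij_betw (sw \<sigma>) (({0..<m} \<rightarrow>\<^sub>E \<Omega>0) \<times> ({0..<m} \<rightarrow>\<^sub>E \<Omega>0)) (({0..<m} \<rightarrow>\<^sub>E \<Omega>0) \<times> ({0..<m} \<rightarrow>\<^sub>E \<Omega>0))"
proof (rule bij_betw_byWitness[where f' = "sw \<sigma>"])
  show "sw \<sigma> ` (({0..<m} \<rightarrow>\<^sub>E \<Omega>0) \<times> ({0..<m} \<rightarrow>\<^sub>E \<Omega>0)) \<subseteq> ({0..<m} \<rightarrow>\<^sub>E \<Omega>0) \<times> ({0..<m} \<rightarrow>\<^sub>E \<Omega>0)"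
    using sw_mem by blast
  then show "sw \<sigma> ` (({0..<m} \<rightarrow>\<^sub>E \<Omega>0) \<times> ({0..<m} \<rightarrow>\<^sub>E \<Omega>0)) \<subseteq> ({0..<m} \<rightarrow>\<^sub>E \<Omega>0) \<times> ({0..<m} \<rightarrow>\<^sub>E \<Omega>0)" .
qed (simp_all add: sw_sw)

lemma cnt_int:
  "int (cnt m u B) = (\<Sum>j\<in>{0..<m}. of_bool (u j \<in> B))"
  unfolding cnt_def by (rule card_filter_sum) simp

lemma inner_bound:
  fixes u v :: "nat \<Rightarrow> 'i"
  assumes uv: "u \<in> {0..<m} \<rightarrow>\<^sub>E \<Omega>0" "v \<in> {0..<m} \<rightarrow>\<^sub>E \<Omega>0"
    and growth: "\<forall>P. P \<subseteq> \<Omega>0 \<longrightarrow> card P \<le> 2*m \<longrightarrow> real (card ((\<lambda>A. A\<inter>P)`F)) \<le> G"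
    and ak: "a < k" and q2: "1 \<le> q2"
  shows "(\<Sum>\<sigma>\<in>{0..<m} \<rightarrow>\<^sub>E (UNIV::bool set).
            (if (\<exists>A\<in>F. cnt m (fst (sw \<sigma> (u,v))) A \<le> a \<and> k \<le> cnt m (snd (sw \<sigma> (u,v))) A) then 1 else 0))
         \<le> G * ((q2 + 1/q2)^m / q2^(k-a))"
proof -
  let ?S = "{0..<m} \<rightarrow>\<^sub>E (UNIV::bool set)"
  define Z where "Z = u ` {0..<m} \<union> v ` {0..<m}"
  define TR where "TR = (\<lambda>A. A \<inter> Z) ` F"
  define e where "e B j = of_bool (v j \<in> B) - (of_bool (u j \<in> B) :: int)" for B j
  define D where "D B \<sigma> = (\<Sum>j\<in>{0..<m}. if \<sigma> j then - e B j else e B j)" for B \<sigma>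
  define bnd where "bnd = (q2 + 1/q2)^m / q2^(k-a)"
  have bnd0: "0 \<le> bnd" using q2 by (simp add: bnd_def)
  have ZO: "Z \<subseteq> \<Omega>0" using uv by (auto simp: Z_def PiE_iff)
  have cZ: "card Z \<le> 2*m"
  proof -
    have "card Z \<le> card (u ` {0..<m}) + card (v ` {0..<m})" unfolding Z_def by (rule card_Un_le)
    also have "\<dots> \<le> m + m" by (intro add_mono) (auto intro: card_image_le[THEN order_trans])
    finally show ?thesis by simp
  qed
  have finZ: "finite Z" by (simp add: Z_def)
  have finTR: "finite TR" unfolding TR_def
    by (rule finite_subset[of _ "Pow Z"]) (use finZ in auto)
  have cTR: "real (card TR) \<le> G" using growth ZO cZ by (simp add: TR_def)
  have key: "(if (\<exists>A\<in>F. cnt m (fst (sw \<sigma> (u,v))) A \<le> a \<and> k \<le> cnt m (snd (sw \<sigma> (u,v))) A) then 1 else 0)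
      \<le> (\<Sum>B\<in>TR. if int (k-a) \<le> D B \<sigma> then 1 else (0::real))" for \<sigma>
  proof (cases "\<exists>A\<in>F. cnt m (fst (sw \<sigma> (u,v))) A \<le> a \<and> k \<le> cnt m (snd (sw \<sigma> (u,v))) A")
    case True
    then obtain A where A: "A \<in> F" "cnt m (fst (sw \<sigma> (u,v))) A \<le> a" "k \<le> cnt m (snd (sw \<sigma> (u,v))) A"
      by blast
    define B where "B = A \<inter> Z"
    define u' where "u' = fst (sw \<sigma> (u,v))"
    define v' where "v' = snd (sw \<sigma> (u,v))"
    have inZ: "u' j \<in> Z" "v' j \<in> Z" if "j \<in> {0..<m}" for j
      using that by (auto simp: u'_def v'_def sw_def Z_def)
    have cu: "cnt m u' B = cnt m u' A" unfolding cnt_def B_def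
      by (rule arg_cong[where f=card]) (use inZ in auto)
    have cv: "cnt m v' B = cnt m v' A" unfolding cnt_def B_def
      by (rule arg_cong[where f=card]) (use inZ in auto)
    have "int (cnt m v' B) - int (cnt m u' B) = D B \<sigma>"
    proof -
      have "int (cnt m v' B) - int (cnt m u' B) = (\<Sum>j\<in>{0..<m}. of_bool (v' j \<in> B) - of_bool (u' j \<in> B))"
        by (simp add: cnt_int sum_subtractf)
      also have "\<dots> = D B \<sigma>" unfolding D_def
        by (rule sum.cong) (auto simp: e_def u'_def v'_def sw_def)
      finally show ?thesis .
    qed
    then have "int (k-a) \<le> D B \<sigma>" using A cu cv ak by (simp add: u'_def v'_def)
    moreover have "B \<in> TR" using A by (auto simp: TR_def B_def)
    ultimately have "1 \<le> (\<Sum>B\<in>TR. if int (k-a) \<le> D B \<sigma> then 1 else (0::real))"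
      using finTR by (intro member_le_sum[where i=B, THEN order_trans[rotated]]) auto
    then show ?thesis by (subst if_P[OF True])
  next
    case False
    show ?thesis by (subst if_not_P[OF False]) (simp add: sum_nonneg)
  qed
  have "(\<Sum>\<sigma>\<in>?S. (if (\<exists>A\<in>F. cnt m (fst (sw \<sigma> (u,v))) A \<le> a \<and> k \<le> cnt m (snd (sw \<sigma> (u,v))) A) then 1 else 0))
      \<le> (\<Sum>\<sigma>\<in>?S. \<Sum>B\<in>TR. if int (k-a) \<le> D B \<sigma> then 1 else (0::real))"
    by (rule sum_mono) (rule key)
  also have "\<dots> = (\<Sum>B\<in>TR. \<Sum>\<sigma>\<in>?S. if int (k-a) \<le> D B \<sigma> then 1 else (0::real))"
    by (rule sum.swap)
  also have "\<dots> = (\<Sum>B\<in>TR. real (card {\<sigma>\<in>?S. int (k-a) \<le> D B \<sigma>}))"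
    by (rule sum.cong[OF refl], rule ind_card[symmetric]) (simp add: finite_PiE)
  also have "\<dots> \<le> (\<Sum>B\<in>TR. bnd)"
  proof (rule sum_mono)
    fix B
    have "\<forall>j. \<bar>e B j\<bar> \<le> 1" by (simp add: e_def)
    from rad[OF q2 this, of m "k-a"] show "real (card {\<sigma>\<in>?S. int (k-a) \<le> D B \<sigma>}) \<le> bnd"
      by (simp add: D_def bnd_def)
  qed
  also have "\<dots> = real (card TR) * bnd" by simp
  also have "\<dots> \<le> G * bnd" by (rule mult_right_mono[OF cTR bnd0])
  finally show ?thesis by (simp add: bnd_def)
qed

lemma eps_sample:
  fixes \<Omega>0 :: "'i set" and F :: "'i set set" and \<beta> q1 q2 G :: real
  assumes fin: "finite \<Omega>0" and ne: "\<Omega>0 \<noteq> {}" and FS: "\<forall>A\<in>F. A \<subseteq> \<Omega>0"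
    and growth: "\<forall>P. P \<subseteq> \<Omega>0 \<longrightarrow> card P \<le> 2*m \<longrightarrow> real (card ((\<lambda>A. A\<inter>P)`F)) \<le> G"
    and ak: "a < k" and q1: "1 \<le> q1" and q2: "1 \<le> q2" and \<beta>: "0 \<le> \<beta>"
    and c1: "q1^(k-1) * (1 - \<beta>*(1 - 1/q1))^m \<le> 1/2"
    and c2: "G * ((q2 + 1/q2)/2)^m / q2^(k-a) < 1/2"
  shows "\<exists>u\<in>{0..<m} \<rightarrow>\<^sub>E \<Omega>0. \<forall>A\<in>F. \<beta> * real (card \<Omega>0) \<le> real (card A) \<longrightarrow> a < cnt m u A"
proof -
  let ?Sp = "{0..<m} \<rightarrow>\<^sub>E \<Omega>0"
  let ?S = "{0..<m} \<rightarrow>\<^sub>E (UNIV::bool set)"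
  define N where "N = real (card \<Omega>0)"
  have N0: "N > 0" using fin ne by (simp add: N_def card_gt_0_iff)
  have finSp: "finite ?Sp" using fin by (simp add: finite_PiE)
  have cSp: "real (card ?Sp) = N ^ m" by (simp add: card_PiE N_def)
  define Bad1 where "Bad1 = {u\<in>?Sp. \<exists>A\<in>F. \<beta> * N \<le> real (card A) \<and> cnt m u A \<le> a}"
  define bad2 where "bad2 \<omega> = (\<exists>A\<in>F. cnt m (fst \<omega>) A \<le> a \<and> k \<le> cnt m (snd \<omega>) A)" for \<omega>
  define Bad2 where "Bad2 = {\<omega>\<in>?Sp \<times> ?Sp. bad2 \<omega>}"
  have finSp2: "finite (?Sp \<times> ?Sp)" using finSp by simp
  define Au where "Au u = (SOME A. A\<in>F \<and> \<beta> * N \<le> real (card A) \<and> cnt m u A \<le> a)" for u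
  define Good where "Good u = {v\<in>?Sp. k \<le> cnt m v (Au u)}" for u
  have Au: "Au u \<in> F \<and> \<beta> * N \<le> real (card (Au u)) \<and> cnt m u (Au u) \<le> a" if "u \<in> Bad1" for u
    unfolding Au_def by (rule someI_ex) (use that in \<open>auto simp: Bad1_def\<close>)
  have cGood: "N^m / 2 \<le> real (card (Good u))" if "u \<in> Bad1" for u
  proof -
    have A: "Au u \<subseteq> \<Omega>0" "\<beta> * real (card \<Omega>0) \<le> real (card (Au u))" using Au[OF that] FS by (auto simp: N_def)
    have "?Sp = {v\<in>?Sp. cnt m v (Au u) \<le> k-1} \<union> Good u" using ak by (auto simp: Good_def)
    moreover have "{v\<in>?Sp. cnt m v (Au u) \<le> k-1} \<inter> Good u = {}" using ak by (auto simp: Good_def)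
    ultimately have "card ?Sp = card {v\<in>?Sp. cnt m v (Au u) \<le> k-1} + card (Good u)"
      using finSp card_Un_disjoint[of "{v\<in>?Sp. cnt m v (Au u) \<le> k-1}" "Good u"]
      by (simp add: Good_def)
    then have "real (card ?Sp) = real (card {v\<in>?Sp. cnt m v (Au u) \<le> k-1}) + real (card (Good u))"
      by simp
    moreover have "real (card {v\<in>?Sp. cnt m v (Au u) \<le> k-1}) \<le> q1^(k-1) * (1 - \<beta>*(1 - 1/q1))^m * N^m"
      using claim1[OF fin A(1) q1 \<beta> A(2)] by (simp add: N_def)
    moreover have "q1^(k-1) * (1 - \<beta>*(1 - 1/q1))^m * N^m \<le> 1/2 * N^m"
      using c1 N0 by (intro mult_right_mono) auto
    ultimately show ?thesis using cSp by linarith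
  qed
  have step1: "real (card Bad1) * (N^m / 2) \<le> real (card Bad2)"
  proof -
    have "Sigma Bad1 Good \<subseteq> Bad2"
    proof
      fix \<omega> assume "\<omega> \<in> Sigma Bad1 Good"
      then obtain u v where uv: "\<omega> = (u,v)" "u \<in> Bad1" "v \<in> Good u" by auto
      have "u \<in> ?Sp" "v \<in> ?Sp" "k \<le> cnt m v (Au u)" using uv by (auto simp: Bad1_def Good_def)
      moreover have "Au u \<in> F" "cnt m u (Au u) \<le> a" using Au[OF uv(2)] by auto
      ultimately show "\<omega> \<in> Bad2" unfolding Bad2_def bad2_def uv(1) by auto
    qed
    then have le1: "card (Sigma Bad1 Good) \<le> card Bad2"
      using finSp2 by (intro card_mono) (auto simp: Bad2_def)
    have finB1: "finite Bad1" using finSp by (simp add: Bad1_def)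
    have "card (Sigma Bad1 Good) = (\<Sum>u\<in>Bad1. card (Good u))"
      by (rule card_SigmaI[OF finB1]) (use finSp in \<open>simp add: Good_def\<close>)
    then have eq1: "real (card (Sigma Bad1 Good)) = (\<Sum>u\<in>Bad1. real (card (Good u)))"
      by simp
    have "(\<Sum>u\<in>Bad1. N^m / 2) \<le> (\<Sum>u\<in>Bad1. real (card (Good u)))"
      using cGood by (intro sum_mono) auto
    moreover have "(\<Sum>u\<in>Bad1. N^m / 2) = real (card Bad1) * (N^m / 2)"
      by simp
    ultimately show ?thesis using eq1 le1
      by (metis of_nat_le_iff order_trans)
  qed
  define bnd where "bnd = G * ((q2 + 1/q2)^m / q2^(k-a))"
  have cS: "card ?S = 2^m" by (simp add: card_PiE)
  have "real (2^m) * real (card Bad2) = (\<Sum>\<sigma>\<in>?S. \<Sum>\<omega>\<in>?Sp \<times> ?Sp. if bad2 \<omega> then 1 else (0::real))"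
    using cS ind_card[OF finSp2, of bad2] by (simp add: Bad2_def)
  also have "\<dots> = (\<Sum>\<sigma>\<in>?S. \<Sum>\<omega>\<in>?Sp \<times> ?Sp. if bad2 (sw \<sigma> \<omega>) then 1 else (0::real))"
    by (rule sum.cong[OF refl], rule sum.reindex_bij_betw[symmetric], rule sw_bij)
  also have "\<dots> = (\<Sum>\<omega>\<in>?Sp \<times> ?Sp. \<Sum>\<sigma>\<in>?S. if bad2 (sw \<sigma> \<omega>) then 1 else (0::real))"
    by (rule sum.swap)
  also have "\<dots> \<le> (\<Sum>\<omega>\<in>?Sp \<times> ?Sp. bnd)"
  proof (rule sum_mono)
    fix \<omega> assume "\<omega> \<in> ?Sp \<times> ?Sp"
    then obtain u v where "\<omega> = (u,v)" "u \<in> ?Sp" "v \<in> ?Sp" by auto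
    then show "(\<Sum>\<sigma>\<in>?S. if bad2 (sw \<sigma> \<omega>) then 1 else (0::real)) \<le> bnd"
      using inner_bound[of u m \<Omega>0 v F G a k q2] growth ak q2 by (simp add: bad2_def bnd_def)
  qed
  also have "\<dots> = N^m * N^m * bnd" using cSp by (simp add: card_cartesian_product)
  finally have step2: "2^m * real (card Bad2) \<le> N^m * N^m * bnd" by simp
  have "bnd = 2^m * (G * ((q2 + 1/q2)/2)^m / q2^(k-a))"
    by (simp add: bnd_def power_divide)
  moreover have "2^m * (G * ((q2 + 1/q2)/2)^m / q2^(k-a)) < 2^m * (1/2)"
    by (rule mult_strict_left_mono[OF c2]) simp
  ultimately have bnd_lt: "bnd < 2^m / 2" by simp
  have "real (card Bad1) * (N^m / 2) * 2^m \<le> N^m * N^m * bnd"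
  proof -
    have "real (card Bad1) * (N^m / 2) * 2^m \<le> real (card Bad2) * 2^m"
      by (rule mult_right_mono[OF step1]) simp
    moreover have "real (card Bad2) * 2^m = 2^m * real (card Bad2)" by (rule mult.commute)
    ultimately show ?thesis using step2 by linarith
  qed
  also have "\<dots> < N^m * N^m * (2^m / 2)"
    using bnd_lt N0 by (intro mult_strict_left_mono) auto
  finally have "(real (card Bad1) * N^m) * 2^m / 2 < (N^m * N^m) * 2^m / 2"
    by (simp add: mult_ac)
  then have "real (card Bad1) * N^m * 2^m < N^m * N^m * 2^m" by linarith
  then have "real (card Bad1) * N^m < N^m * N^m"
    by (rule mult_right_less_imp_less) simp
  then have "real (card Bad1) < N^m"
    by (rule mult_right_less_imp_less) (use N0 in simp)
  then have "card Bad1 < card ?Sp" using cSp by (metis of_nat_less_iff)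
  moreover have "finite Bad1" using finSp by (simp add: Bad1_def)
  ultimately have "\<not> ?Sp \<subseteq> Bad1" using card_mono[of Bad1 ?Sp] by (meson not_le)
  then have "?Sp - Bad1 \<noteq> {}" by blast
  then obtain u where "u \<in> ?Sp" "u \<notin> Bad1" by blast
  then show ?thesis by (intro bexI[of _ u]) (auto simp: Bad1_def N_def not_le)
qed

definition Hc :: "(nat \<Rightarrow> bool) set \<Rightarrow> (nat \<Rightarrow> bool) \<Rightarrow> nat set \<Rightarrow> (nat \<Rightarrow> bool)" where
  "Hc C c0 U = (SOME h. h \<in> C \<and> (\<forall>x\<in>U. h x = c0 x))"

lemma Hc:
  assumes "c0 \<in> C"
  shows "Hc C c0 U \<in> C \<and> (\<forall>x\<in>U. Hc C c0 U x = c0 x)"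
proof -
  let ?P = "\<lambda>h. h \<in> C \<and> (\<forall>x\<in>U. h x = c0 x)"
  have "?P c0" using assms by simp
  then have "?P (SOME h. ?P h)" by (rule someI[of ?P c0])
  then show ?thesis unfolding Hc_def .
qed

lemma trace_primal:
  assumes vcC: "\<forall>Y. shatters X C Y \<longrightarrow> finite Y \<and> card Y \<le> d"
    and Q: "finite Q" "Q \<subseteq> X" "card Q \<le> n" and d: "1 \<le> d" "d \<le> n"
  shows "real (card ((\<lambda>h. {x\<in>Q. h x}) ` C)) \<le> (3 * real n / real d)^d"
proof -
  have "card ((\<lambda>h. {x\<in>Q. h x}) ` C) \<le> (\<Sum>i\<le>d. card Q choose i)"
  proof (rule sauer[OF Q(1)])
    show "\<forall>B\<in>(\<lambda>h. {x\<in>Q. h x}) ` C. B \<subseteq> Q" by auto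
  next
    fix S assume S: "S \<subseteq> Q" "shat ((\<lambda>h. {x\<in>Q. h x}) ` C) S"
    have "shatters X C S" unfolding shatters_def
    proof (intro conjI allI impI)
      show "S \<subseteq> X" using S Q by auto
    next
      fix Z assume "Z \<subseteq> S"
      then obtain h where h: "h \<in> C" "{x\<in>Q. h x} \<inter> S = Z" using S(2) by (auto simp: shat_def)
      then show "\<exists>c\<in>C. (\<forall>x\<in>Z. c x) \<and> (\<forall>x\<in>S - Z. \<not> c x)" using S(1)
        by (intro bexI[of _ h]) auto
    qed
    then show "card S \<le> d" using vcC by auto
  qed
  then have "real (card ((\<lambda>h. {x\<in>Q. h x}) ` C)) \<le> real (\<Sum>i\<le>d. card Q choose i)" by linarith
  also have "\<dots> \<le> (3 * real n / real d)^d" by (rule growth_bound[OF d Q(3)])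
  finally show ?thesis .
qed

lemma numA1: "(2::real) * (31/32)^64 \<le> 1" by (simp add: power_divide)
lemma numA2: "((65/64 + 64/65)/2)^64 / (65/64) \<le> (129/130::real)" by (simp add: power_divide)
lemma numC1: "(2::real)^5 * (11/20)^8 \<le> 1" by (simp add: power_divide)
lemma numC2: "((9/8 + 8/9)/2)^8 / (9/8) \<le> (16/17::real)" by (simp add: power_divide)
lemma bernA: "(2::real) \<le> (130/129)^129"
  using Bernoulli_inequality[of "1/129::real" 129] by simp
lemma bernC: "(2::real) \<le> (17/16)^16"
  using Bernoulli_inequality[of "1/16::real" 16] by simp

lemma powd_le: "0 \<le> x \<Longrightarrow> x \<le> 1 \<Longrightarrow> 1 \<le> d \<Longrightarrow> x ^ d \<le> (x::real)"
  by (metis One_nat_def power_decreasing power_one_right)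

lemma constA1:
  assumes "1 \<le> k"
  shows "(2::real)^(k-1) * (1 - 1/16*(1 - 1/2))^(64*k) \<le> 1/2"
proof -
  have "(2::real)^(k-1) * (1 - 1/16*(1 - 1/2))^(64*k) = (2 * (31/32)^64)^k / 2"
    using assms by (simp add: power_mult power_mult_distrib power_diff)
  also have "\<dots> \<le> 1/2"
  proof -
    have "(2 * (31/32)^64)^k \<le> (1::real)" by (rule power_le_one[OF _ numA1]) simp
    then show ?thesis by linarith
  qed
  finally show ?thesis .
qed

lemma c2_gen:
  fixes q y g \<rho>0 :: real and n c d :: nat
  assumes q: "q > 0" and d: "1 \<le> d" and g: "0 \<le> g" and y0: "0 \<le> y^n / q" and y\<rho>: "y^n / q \<le> \<rho>0"
    and fin: "g * \<rho>0^c < B" and B: "B \<le> 1"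
  shows "g^d * y^(n*(c*d)) / q^(c*d) < B"
proof -
  have "g^d * y^(n*(c*d)) / q^(c*d) = (g * (y^n/q)^c)^d"
    by (simp add: power_mult power_mult_distrib power_divide)
  also have "\<dots> \<le> (g * \<rho>0^c)^d"
    by (intro power_mono mult_left_mono y\<rho> y0 g mult_nonneg_nonneg zero_le_power)
  also have "\<dots> \<le> g * \<rho>0^c"
  proof (rule powd_le[OF _ _ d])
    have "0 \<le> \<rho>0" using y0 y\<rho> by linarith
    then show "0 \<le> g * \<rho>0^c" using g by simp
    show "g * \<rho>0^c \<le> 1" using fin B by linarith
  qed
  also have "\<dots> < B" by (rule fin)
  finally show ?thesis .
qed

lemma inv_pow:
  fixes b :: real
  assumes "0 < b" "2 \<le> b^n"
  shows "(1/b)^(n*t) \<le> 1/2^t"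
proof -
  have "(1/b)^(n*t) = 1 / (b^n)^t" by (simp add: power_one_over power_mult)
  also have "\<dots> \<le> 1/2^t"
    by (intro divide_left_mono power_mono assms) (use assms in auto)
  finally show ?thesis .
qed

lemma numA3: "384 * 3096 * (129/130::real)^3096 < 1/2"
proof -
  have "(1/(130/129::real))^(129*24) \<le> 1/2^24" by (rule inv_pow[OF _ bernA]) simp
  then have "(129/130::real)^3096 \<le> 1/2^24" by simp
  then have "384 * 3096 * (129/130::real)^3096 \<le> 384 * 3096 * (1/2^24)" by simp
  also have "\<dots> < 1/2" by simp
  finally show ?thesis .
qed

lemma numC3: "48 * 256 * (16/17::real)^256 < 1/4"
proof -
  have "(1/(17/16::real))^(16*16) \<le> 1/2^16" by (rule inv_pow[OF _ bernC]) simp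
  then have "(16/17::real)^256 \<le> 1/2^16" by simp
  then have "48 * 256 * (16/17::real)^256 \<le> 48 * 256 * (1/2^16)" by simp
  also have "\<dots> < 1/4" by simp
  finally show ?thesis .
qed

lemma constA2:
  assumes d: "1 \<le> d"
  shows "(384 * 3096::real)^d * (((65/64) + 1/(65/64))/2)^(64 * (3096*d)) / (65/64)^(3096*d) < 1/2"
proof (rule c2_gen[OF _ d])
  show "((65/64 + 1/(65/64))/2)^64 / (65/64) \<le> (129/130::real)" using numA2 by simp
  show "384 * 3096 * (129/130::real)^3096 < 1/2" by (rule numA3)
qed (auto simp: power_divide)

lemma constC2:
  assumes d: "1 \<le> ds"
  shows "(48 * 256::real)^ds * (((9/8) + 1/(9/8))/2)^(8 * (256*ds)) / (9/8)^(256*ds) < 1/4"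
proof (rule c2_gen[OF _ d])
  show "((9/8 + 1/(9/8))/2)^8 / (9/8) \<le> (16/17::real)" using numC2 by simp
  show "48 * 256 * (16/17::real)^256 < 1/4" by (rule numC3)
qed (auto simp: power_divide)

lemma constC1:
  "(2::real)^(5*c-1) * (1 - 9/10*(1 - 1/2))^(8*c) \<le> 1/2" if "1 \<le> c"
proof -
  have "(2::real)^(5*c-1) * (1 - 9/10*(1 - 1/2))^(8*c) = (2^5 * (11/20)^8)^c / 2"
    using that by (simp add: power_mult power_mult_distrib power_diff)
  also have "\<dots> \<le> 1/2"
  proof -
    have "(2^5 * (11/20)^8)^c \<le> (1::real)" by (rule power_le_one[OF _ numC1]) simp
    then show ?thesis by linarith
  qed
  finally show ?thesis .
qed

lemma weak:
  fixes w :: "nat \<Rightarrow> nat"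
  assumes vcC: "\<forall>Y. shatters X C Y \<longrightarrow> finite Y \<and> card Y \<le> d" and d: "1 \<le> d"
    and c0: "c0 \<in> C" and Y: "finite Y" "Y \<subseteq> X" "Y \<noteq> {}" and w: "\<forall>x\<in>Y. 0 < w x"
  shows "\<exists>v\<in>{0..<64*(3096*d)} \<rightarrow>\<^sub>E Y.
           16 * (\<Sum>x\<in>{x\<in>Y. Hc C c0 (v ` {0..<64*(3096*d)}) x \<noteq> c0 x}. w x) < (\<Sum>x\<in>Y. w x)"
proof -
  define k where "k = 3096*d"
  define m where "m = 64*k"
  define \<Omega>0 where "\<Omega>0 = Sigma Y (\<lambda>x. {0..<w x})"
  define F where "F = (\<lambda>h. {\<omega>\<in>\<Omega>0. h (fst \<omega>) \<noteq> c0 (fst \<omega>)}) ` C"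
  have fin: "finite \<Omega>0" using Y by (auto simp: \<Omega>0_def intro!: finite_SigmaI)
  have ne: "\<Omega>0 \<noteq> {}"
  proof -
    obtain x where "x \<in> Y" using Y by auto
    then have "(x, 0) \<in> \<Omega>0" using w by (auto simp: \<Omega>0_def)
    then show ?thesis by auto
  qed
  have FS: "\<forall>A\<in>F. A \<subseteq> \<Omega>0" by (auto simp: F_def)
  have growth: "\<forall>P. P \<subseteq> \<Omega>0 \<longrightarrow> card P \<le> 2*m \<longrightarrow> real (card ((\<lambda>A. A\<inter>P)`F)) \<le> (384*3096)^d"
  proof (intro allI impI)
    fix P assume P: "P \<subseteq> \<Omega>0" "card P \<le> 2*m"
    define Q where "Q = fst ` P"
    have finP: "finite P" using P fin finite_subset by blast
    have eq: "(\<lambda>A. A\<inter>P)`F = (\<lambda>T. {\<omega>\<in>P. (fst \<omega> \<in> T) \<noteq> c0 (fst \<omega>)}) ` ((\<lambda>h. {x\<in>Q. h x}) ` C)"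
      unfolding F_def image_image
    proof (rule image_cong[OF refl])
      fix h show "{\<omega>\<in>\<Omega>0. h (fst \<omega>) \<noteq> c0 (fst \<omega>)} \<inter> P = {\<omega>\<in>P. (fst \<omega> \<in> {x\<in>Q. h x}) \<noteq> c0 (fst \<omega>)}"
        using P(1) by (auto simp: Q_def)
    qed
    have "card ((\<lambda>A. A\<inter>P)`F) \<le> card ((\<lambda>h. {x\<in>Q. h x}) ` C)"
      unfolding eq
    proof (rule card_image_le)
      have "(\<lambda>h. {x\<in>Q. h x}) ` C \<subseteq> Pow Q" by auto
      moreover have "finite (Pow Q)" using finP by (simp add: Q_def)
      ultimately show "finite ((\<lambda>h. {x\<in>Q. h x}) ` C)" by (rule finite_subset)
    qed
    moreover have "real (card ((\<lambda>h. {x\<in>Q. h x}) ` C)) \<le> (3 * real (2*m) / real d)^d"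
    proof (rule trace_primal[OF vcC])
      show "finite Q" using finP by (simp add: Q_def)
      show "Q \<subseteq> X" using P(1) Y(2) by (auto simp: Q_def \<Omega>0_def)
      show "card Q \<le> 2*m" using P(2) card_image_le[OF finP, of fst] by (simp add: Q_def)
      show "1 \<le> d" by (rule d)
      show "d \<le> 2*m" by (simp add: m_def k_def)
    qed
    moreover have "3 * real (2*m) / real d = 384*3096" using d by (simp add: m_def k_def)
    ultimately show "real (card ((\<lambda>A. A\<inter>P)`F)) \<le> (384*3096)^d" by simp
  qed
  have k1: "1 \<le> k" using d by (simp add: k_def)
  have c1: "2^(k-1) * (1 - 1/16*(1 - 1/2))^m \<le> (1/2::real)"
    using constA1[OF k1] by (simp add: m_def)
  have c2: "(384*3096)^d * ((65/64 + 1/(65/64))/2)^m / (65/64)^(k-0) < (1/2::real)"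
    using constA2[OF d] by (simp add: m_def k_def)
  obtain u where u: "u \<in> {0..<m} \<rightarrow>\<^sub>E \<Omega>0"
    and uA: "\<forall>A\<in>F. 1/16 * real (card \<Omega>0) \<le> real (card A) \<longrightarrow> 0 < cnt m u A"
    using eps_sample[OF fin ne FS growth _ _ _ _ c1 c2] k1 by auto
  define v where "v j = (if j < m then fst (u j) else undefined)" for j
  have v: "v \<in> {0..<m} \<rightarrow>\<^sub>E Y" using u by (auto simp: v_def PiE_iff \<Omega>0_def extensional_def)
  define h where "h = Hc C c0 (v ` {0..<m})"
  have h: "h \<in> C" "\<forall>x\<in>v ` {0..<m}. h x = c0 x" using Hc[OF c0] by (auto simp: h_def)
  define A where "A = {\<omega>\<in>\<Omega>0. h (fst \<omega>) \<noteq> c0 (fst \<omega>)}"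
  have AF: "A \<in> F" using h by (auto simp: A_def F_def)
  have "cnt m u A = 0"
  proof -
    have "{j\<in>{0..<m}. u j \<in> A} = {}"
    proof (safe)
      fix j assume j: "j \<in> {0..<m}" "u j \<in> A"
      have "fst (u j) = v j" using j by (simp add: v_def)
      then have "h (fst (u j)) = c0 (fst (u j))" using h(2) j(1) by auto
      then show "j \<in> {}" using j(2) by (simp add: A_def)
    qed
    then show ?thesis by (simp add: cnt_def)
  qed
  then have lt: "real (card A) < 1/16 * real (card \<Omega>0)" using uA AF by force
  have "A = Sigma {x\<in>Y. h x \<noteq> c0 x} (\<lambda>x. {0..<w x})" by (auto simp: A_def \<Omega>0_def)
  then have cA: "card A = (\<Sum>x\<in>{x\<in>Y. h x \<noteq> c0 x}. w x)" using Y(1) by simp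
  have cO: "card \<Omega>0 = (\<Sum>x\<in>Y. w x)" using Y(1) by (simp add: \<Omega>0_def)
  have "16 * (\<Sum>x\<in>{x\<in>Y. h x \<noteq> c0 x}. w x) < (\<Sum>x\<in>Y. w x)"
    using lt cA cO by linarith
  then show ?thesis using v by (auto simp: h_def m_def k_def)
qed

lemma boost:
  fixes hyp :: "'v \<Rightarrow> nat \<Rightarrow> bool" and V :: "'v set"
  assumes Y: "finite Y"
    and WL: "\<forall>w::nat\<Rightarrow>nat. (\<forall>x\<in>Y. 0 < w x) \<longrightarrow> (\<exists>v\<in>V. 16 * (\<Sum>x\<in>{x\<in>Y. hyp v x \<noteq> c0 x}. w x) < (\<Sum>x\<in>Y. w x))"
  shows "\<exists>vs. length vs = T \<and> set vs \<subseteq> V \<and>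
     real (\<Sum>x\<in>Y. (2::nat)^(card {t\<in>{0..<T}. hyp (vs!t) x \<noteq> c0 x})) \<le> real (card Y) * (17/16)^T"
proof (induction T)
  case 0
  show ?case by (intro exI[of _ "[]"]) simp
next
  case (Suc T)
  then obtain vs where vs: "length vs = T" "set vs \<subseteq> V"
    "real (\<Sum>x\<in>Y. (2::nat)^(card {t\<in>{0..<T}. hyp (vs!t) x \<noteq> c0 x})) \<le> real (card Y) * (17/16)^T"
    by blast
  define M where "M x = card {t\<in>{0..<T}. hyp (vs!t) x \<noteq> c0 x}" for x
  obtain v where v: "v \<in> V" "16 * (\<Sum>x\<in>{x\<in>Y. hyp v x \<noteq> c0 x}. (2::nat)^M x) < (\<Sum>x\<in>Y. 2^M x)"
    using WL[rule_format, of "\<lambda>x. 2^M x"] by auto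
  define vs' where "vs' = vs @ [v]"
  have M': "card {t\<in>{0..<Suc T}. hyp (vs'!t) x \<noteq> c0 x} = M x + (if hyp v x \<noteq> c0 x then 1 else 0)" for x
  proof -
    have e1: "{t\<in>{0..<T}. hyp (vs'!t) x \<noteq> c0 x} = {t\<in>{0..<T}. hyp (vs!t) x \<noteq> c0 x}"
      using vs(1) by (auto simp: vs'_def nth_append)
    have "{0..<Suc T} = insert T {0..<T}" by auto
    then have "{t\<in>{0..<Suc T}. hyp (vs'!t) x \<noteq> c0 x}
       = (if hyp v x \<noteq> c0 x then insert T {t\<in>{0..<T}. hyp (vs!t) x \<noteq> c0 x} else {t\<in>{0..<T}. hyp (vs!t) x \<noteq> c0 x})"
      using e1 vs(1) by (auto simp: vs'_def nth_append)
    then show ?thesis by (simp add: M_def)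
  qed
  have "(\<Sum>x\<in>Y. (2::nat)^(card {t\<in>{0..<Suc T}. hyp (vs'!t) x \<noteq> c0 x}))
      = (\<Sum>x\<in>Y. 2^M x + (if hyp v x \<noteq> c0 x then 2^M x else 0))"
  proof (rule sum.cong[OF refl])
    fix x
    show "(2::nat)^(card {t\<in>{0..<Suc T}. hyp (vs'!t) x \<noteq> c0 x}) = 2^M x + (if hyp v x \<noteq> c0 x then 2^M x else 0)"
      unfolding M'[of x] by simp
  qed
  also have "\<dots> = (\<Sum>x\<in>Y. 2^M x) + (\<Sum>x\<in>{x\<in>Y. hyp v x \<noteq> c0 x}. 2^M x)"
    using Y by (simp add: sum.distrib sum.inter_filter)
  finally have eq: "(\<Sum>x\<in>Y. (2::nat)^(card {t\<in>{0..<Suc T}. hyp (vs'!t) x \<noteq> c0 x}))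
      = (\<Sum>x\<in>Y. 2^M x) + (\<Sum>x\<in>{x\<in>Y. hyp v x \<noteq> c0 x}. 2^M x)" .
  have "real (\<Sum>x\<in>Y. (2::nat)^(card {t\<in>{0..<Suc T}. hyp (vs'!t) x \<noteq> c0 x}))
     \<le> 17/16 * real (\<Sum>x\<in>Y. (2::nat)^M x)"
    using v(2) unfolding eq by linarith
  also have "\<dots> \<le> 17/16 * (real (card Y) * (17/16)^T)"
    using vs(3) by (simp add: M_def)
  also have "\<dots> = real (card Y) * (17/16)^Suc T" by simp
  finally show ?case using vs v by (intro exI[of _ vs']) (auto simp: vs'_def)
qed

lemma shatD: "shat H S \<Longrightarrow> Z \<subseteq> S \<Longrightarrow> \<exists>B\<in>H. B \<inter> S = Z"
  by (simp add: shat_def)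

lemma trace_dual:
  assumes vcD: "\<forall>Y'. shatters C (dual_class X) Y' \<longrightarrow> finite Y' \<and> card Y' \<le> ds"
    and P: "finite P" "card P \<le> n" and g: "\<forall>t\<in>P. g t \<in> C" and Yx: "Yx \<subseteq> X"
    and d: "1 \<le> ds" "ds \<le> n"
  shows "real (card ((\<lambda>x. {t\<in>P. g t x}) ` Yx)) \<le> (3 * real n / real ds)^ds"
proof -
  have "card ((\<lambda>x. {t\<in>P. g t x}) ` Yx) \<le> (\<Sum>i\<le>ds. card P choose i)"
  proof (rule sauer[OF P(1)])
    show "\<forall>B\<in>(\<lambda>x. {t\<in>P. g t x}) ` Yx. B \<subseteq> P" by auto
  next
    fix S assume S: "S \<subseteq> P" "shat ((\<lambda>x. {t\<in>P. g t x}) ` Yx) S"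
    have inj: "inj_on g S"
    proof (rule inj_onI)
      fix t1 t2 assume t: "t1 \<in> S" "t2 \<in> S" "g t1 = g t2"
      show "t1 = t2"
      proof (rule ccontr)
        assume ne: "t1 \<noteq> t2"
        have "{t1} \<subseteq> S" using t(1) by simp
        from shatD[OF S(2) this] obtain B where B: "B \<in> (\<lambda>x. {t\<in>P. g t x}) ` Yx" "B \<inter> S = {t1}"
          by (elim bexE)
        from B(1) obtain x where "x \<in> Yx" "B = {t\<in>P. g t x}" by (elim imageE)
        with B(2) have "{t\<in>P. g t x} \<inter> S = {t1}" by simp
        then have e: "{t\<in>P. g t x} \<inter> S = {t1}" by simp
        have "t1 \<in> {t\<in>P. g t x} \<inter> S" unfolding e by simp
        then have "g t1 x" by simp
        have "t2 \<notin> {t\<in>P. g t x} \<inter> S" unfolding e using ne by simp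
        moreover have "t2 \<in> P" "t2 \<in> S" using t(2) S(1) by auto
        ultimately have "\<not> g t2 x" by simp
        then show False using t(3) \<open>g t1 x\<close> by simp
      qed
    qed
    have "shatters C (dual_class X) (g ` S)" unfolding shatters_def
    proof (intro conjI allI impI)
      show "g ` S \<subseteq> C" using g S(1) by auto
    next
      fix Z' assume Z': "Z' \<subseteq> g ` S"
      define Z where "Z = {t\<in>S. g t \<in> Z'}"
      have "Z \<subseteq> S" by (auto simp: Z_def)
      from shatD[OF S(2) this] obtain B where B: "B \<in> (\<lambda>x. {t\<in>P. g t x}) ` Yx" "B \<inter> S = Z"
        by (elim bexE)
      from B(1) obtain x where x0: "x \<in> Yx" "B = {t\<in>P. g t x}" by (elim imageE)
      with B(2) have x: "x \<in> Yx" "{t\<in>P. g t x} \<inter> S = Z" by simp_all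
      have "(\<lambda>c. c x) \<in> dual_class X" using x(1) Yx by (auto simp: dual_class_def)
      moreover have "\<forall>c\<in>Z'. c x"
      proof
        fix c assume "c \<in> Z'"
        then obtain t where "t \<in> S" "c = g t" using Z' by auto
        then have "t \<in> Z" using \<open>c \<in> Z'\<close> by (simp add: Z_def)
        then show "c x" using x(2) \<open>c = g t\<close> by auto
      qed
      moreover have "\<forall>c\<in>g ` S - Z'. \<not> c x"
      proof
        fix c assume "c \<in> g ` S - Z'"
        then obtain t where "t \<in> S" "c = g t" "c \<notin> Z'" by auto
        then have "t \<notin> Z" by (simp add: Z_def)
        then show "\<not> c x" using x(2) \<open>c = g t\<close> \<open>t \<in> S\<close> S(1) by auto
      qed
      ultimately show "\<exists>c\<in>dual_class X. (\<forall>x\<in>Z'. c x) \<and> (\<forall>x\<in>g ` S - Z'. \<not> c x)"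
        by (intro bexI[of _ "\<lambda>c. c x"]) auto
    qed
    then have "card (g ` S) \<le> ds" using vcD by auto
    then show "card S \<le> ds" using card_image[OF inj] by simp
  qed
  then have "real (card ((\<lambda>x. {t\<in>P. g t x}) ` Yx)) \<le> real (\<Sum>i\<le>ds. card P choose i)" by linarith
  also have "\<dots> \<le> (3 * real n / real ds)^ds" by (rule growth_bound[OF d P(2)])
  finally show ?thesis .
qed

lemma stepC:
  fixes g :: "nat \<Rightarrow> nat \<Rightarrow> bool"
  assumes vcD: "\<forall>Y'. shatters C (dual_class X) Y' \<longrightarrow> finite Y' \<and> card Y' \<le> ds"
    and ds: "1 \<le> ds" and Y: "finite Y" "Y \<subseteq> X" and T: "0 < T"
    and hC: "\<forall>t<T. g t \<in> C"
    and good: "\<forall>x\<in>Y. 9/10 * real T \<le> real (card {t\<in>{0..<T}. g t x = c0 x})"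
  shows "\<exists>u\<in>{0..<8*(256*ds)} \<rightarrow>\<^sub>E {0..<T}. \<forall>x\<in>Y. 8*(256*ds) < 2 * card {j\<in>{0..<8*(256*ds)}. g (u j) x = c0 x}"
proof -
  define c where "c = 256*ds"
  define r where "r = 8*c"
  define F where "F = (\<lambda>x. {t\<in>{0..<T}. g t x = c0 x}) ` Y"
  have fin: "finite {0..<T}" by simp
  have ne: "{0..<T} \<noteq> {}" using T by simp
  have FS: "\<forall>A\<in>F. A \<subseteq> {0..<T}" by (auto simp: F_def)
  have growth: "\<forall>P. P \<subseteq> {0..<T} \<longrightarrow> card P \<le> 2*r \<longrightarrow> real (card ((\<lambda>A. A\<inter>P)`F)) \<le> 2*(48*256)^ds"
  proof (intro allI impI)
    fix P assume P: "P \<subseteq> {0..<T}" "card P \<le> 2*r"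
    have finP: "finite P" using P(1) finite_subset by blast
    define E where "E = (\<lambda>x. {t\<in>P. g t x}) ` Y"
    have finE: "finite E"
    proof -
      have "E \<subseteq> Pow P" by (auto simp: E_def)
      then show ?thesis using finP by (simp add: finite_subset)
    qed
    have sub: "(\<lambda>A. A\<inter>P)`F \<subseteq> E \<union> (\<lambda>B. P - B) ` E"
    proof
      fix B assume "B \<in> (\<lambda>A. A\<inter>P)`F"
      then obtain x where x: "x \<in> Y" "B = {t\<in>{0..<T}. g t x = c0 x} \<inter> P" by (auto simp: F_def)
      show "B \<in> E \<union> (\<lambda>B. P - B) ` E"
      proof (cases "c0 x")
        case True
        then have "B = {t\<in>P. g t x}" using x(2) P(1) by auto
        then show ?thesis using x(1) by (auto simp: E_def)
      next
        case False
        then have "B = P - {t\<in>P. g t x}" using x(2) P(1) by auto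
        then show ?thesis using x(1) by (auto simp: E_def)
      qed
    qed
    have "card ((\<lambda>A. A\<inter>P)`F) \<le> card (E \<union> (\<lambda>B. P - B) ` E)"
      by (rule card_mono[OF _ sub]) (use finE in simp)
    also have "\<dots> \<le> card E + card ((\<lambda>B. P - B) ` E)" by (rule card_Un_le)
    also have "\<dots> \<le> card E + card E" using card_image_le[OF finE] by simp
    finally have c1: "real (card ((\<lambda>A. A\<inter>P)`F)) \<le> 2 * real (card E)" by simp
    have "real (card E) \<le> (3 * real (2*r) / real ds)^ds"
      unfolding E_def
    proof (rule trace_dual[OF vcD finP P(2)])
      show "\<forall>t\<in>P. g t \<in> C" using hC P(1) by auto
      show "Y \<subseteq> X" by (rule Y(2))
      show "1 \<le> ds" by (rule ds)
      show "ds \<le> 2*r" by (simp add: r_def c_def)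
    qed
    moreover have "(3 * real (2*r) / real ds)^ds = (48*256::real)^ds" using ds by (simp add: r_def c_def)
    ultimately show "real (card ((\<lambda>A. A\<inter>P)`F)) \<le> 2*(48*256)^ds" using c1 by linarith
  qed
  have c1': "1 \<le> c" using ds by (simp add: c_def)
  have c1: "2^(5*c-1) * (1 - 9/10*(1 - 1/2))^r \<le> (1/2::real)"
    using constC1[OF c1'] by (simp add: r_def)
  have kma: "5*c - 4*c = c" by simp
  have c2: "2*(48*256)^ds * ((9/8 + 1/(9/8))/2)^r / (9/8)^(5*c - 4*c) < (1/2::real)"
    using constC2[OF ds] unfolding kma by (simp add: r_def c_def)
  have ak: "4*c < 5*c" using c1' by simp
  obtain u where u: "u \<in> {0..<r} \<rightarrow>\<^sub>E {0..<T}"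
    and uA: "\<forall>A\<in>F. 9/10 * real (card {0..<T}) \<le> real (card A) \<longrightarrow> 4*c < cnt r u A"
    using eps_sample[OF fin ne FS growth ak _ _ _ c1 c2] by auto
  have "\<forall>x\<in>Y. r < 2 * card {j\<in>{0..<r}. g (u j) x = c0 x}"
  proof
    fix x assume x: "x \<in> Y"
    define A where "A = {t\<in>{0..<T}. g t x = c0 x}"
    have "A \<in> F" using x by (simp add: A_def F_def)
    moreover have "9/10 * real (card {0..<T}) \<le> real (card A)" using good x by (simp add: A_def)
    ultimately have "4*c < cnt r u A" using uA by blast
    moreover have "cnt r u A = card {j\<in>{0..<r}. g (u j) x = c0 x}"
      unfolding cnt_def A_def
      by (rule arg_cong[where f=card]) (use u in \<open>auto simp: PiE_iff\<close>)
    ultimately show "r < 2 * card {j\<in>{0..<r}. g (u j) x = c0 x}" by (simp add: r_def)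
  qed
  then show ?thesis using u by (auto simp: r_def c_def)
qed

lemma card_split:
  assumes "finite A"
  shows "card {x\<in>A. P x} + card {x\<in>A. \<not> P x} = card A"
proof -
  have "A = {x\<in>A. P x} \<union> {x\<in>A. \<not> P x}" by auto
  moreover have "{x\<in>A. P x} \<inter> {x\<in>A. \<not> P x} = {}" by auto
  ultimately show ?thesis using assms card_Un_disjoint[of "{x\<in>A. P x}" "{x\<in>A. \<not> P x}"] by simp
qed

lemma main_exists:
  assumes vcC: "\<forall>Y. shatters X C Y \<longrightarrow> finite Y \<and> card Y \<le> d"
    and vcD: "\<forall>Y'. shatters C (dual_class X) Y' \<longrightarrow> finite Y' \<and> card Y' \<le> ds"
    and d: "1 \<le> d" and ds: "1 \<le> ds" and c0: "c0 \<in> C"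
    and Y: "finite Y" "Y \<subseteq> X" "Y \<noteq> {}"
  shows "\<exists>V. (\<forall>j<8*(256*ds). V j \<in> {0..<64*(3096*d)} \<rightarrow>\<^sub>E Y) \<and>
     (\<forall>x\<in>Y. 8*(256*ds) < 2 * card {j\<in>{0..<8*(256*ds)}. Hc C c0 (V j ` {0..<64*(3096*d)}) x = c0 x})"
proof -
  define s where "s = 64*(3096*d)"
  define r where "r = 8*(256*ds)"
  define hyp where "hyp v = Hc C c0 (v ` {0..<s})" for v :: "nat \<Rightarrow> nat"
  define VV where "VV = {0..<s} \<rightarrow>\<^sub>E Y"
  have WL: "\<forall>w::nat\<Rightarrow>nat. (\<forall>x\<in>Y. 0 < w x) \<longrightarrow> (\<exists>v\<in>VV. 16 * (\<Sum>x\<in>{x\<in>Y. hyp v x \<noteq> c0 x}. w x) < (\<Sum>x\<in>Y. w x))"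
    using weak[OF vcC d c0 Y] by (simp add: hyp_def VV_def s_def)
  define b where "b = (2::real) / (17/16)^10"
  have b1: "1 < b" by (simp add: b_def power_divide)
  obtain n where n: "real (card Y) < b^n" using real_arch_pow[OF b1] by blast
  define K where "K = Suc n"
  define T where "T = 10*K"
  obtain vs where vs: "length vs = T" "set vs \<subseteq> VV"
    "real (\<Sum>x\<in>Y. (2::nat)^(card {t\<in>{0..<T}. hyp (vs!t) x \<noteq> c0 x})) \<le> real (card Y) * (17/16)^T"
    using boost[OF Y(1) WL] by blast
  have bound: "real (card Y) * (17/16)^T < 2^K"
  proof -
    have "b^n \<le> b^K" using b1 by (intro power_increasing) (auto simp: K_def)
    then have "real (card Y) < b^K" using n by linarith
    then have "real (card Y) * ((17/16)^10)^K < b^K * ((17/16)^10)^K"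
      by (intro mult_strict_right_mono) auto
    also have "b^K * ((17/16)^10)^K = (b * (17/16)^10)^K" by (simp add: power_mult_distrib)
    also have "b * (17/16)^10 = 2" by (simp add: b_def)
    finally show ?thesis by (simp add: T_def power_mult)
  qed
  have Mx: "card {t\<in>{0..<T}. hyp (vs!t) x \<noteq> c0 x} \<le> K" if x: "x \<in> Y" for x
  proof (rule ccontr)
    assume "\<not> card {t\<in>{0..<T}. hyp (vs!t) x \<noteq> c0 x} \<le> K"
    then have "K \<le> card {t\<in>{0..<T}. hyp (vs!t) x \<noteq> c0 x}" by simp
    then have "(2::nat)^K \<le> 2^card {t\<in>{0..<T}. hyp (vs!t) x \<noteq> c0 x}" by (rule power_increasing) simp
    also have "\<dots> \<le> (\<Sum>x\<in>Y. (2::nat)^(card {t\<in>{0..<T}. hyp (vs!t) x \<noteq> c0 x}))"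
      by (rule member_le_sum) (use x Y in auto)
    finally have "real ((2::nat)^K) \<le> real (\<Sum>x\<in>Y. (2::nat)^(card {t\<in>{0..<T}. hyp (vs!t) x \<noteq> c0 x}))"
      by (simp only: of_nat_le_iff)
    then have "(2::real)^K \<le> real (card Y) * (17/16)^T" using vs(3) by simp
    then show False using bound by linarith
  qed
  have good: "\<forall>x\<in>Y. 9/10 * real T \<le> real (card {t\<in>{0..<T}. hyp (vs!t) x = c0 x})"
  proof
    fix x assume x: "x \<in> Y"
    have "card {t\<in>{0..<T}. hyp (vs!t) x = c0 x} + card {t\<in>{0..<T}. \<not> hyp (vs!t) x = c0 x} = card {0..<T}"
      by (rule card_split) simp
    then have "card {t\<in>{0..<T}. hyp (vs!t) x = c0 x} + card {t\<in>{0..<T}. \<not> hyp (vs!t) x = c0 x} = T"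
      by (simp only: card_atLeastLessThan diff_zero)
    then show "9/10 * real T \<le> real (card {t\<in>{0..<T}. hyp (vs!t) x = c0 x})"
      using Mx[OF x] by (simp add: T_def)
  qed
  have T0: "0 < T" by (simp add: T_def K_def)
  have hC: "\<forall>t<T. hyp (vs!t) \<in> C" using Hc[OF c0] by (simp add: hyp_def)
  obtain u where u: "u \<in> {0..<8*(256*ds)} \<rightarrow>\<^sub>E {0..<T}"
    and maj: "\<forall>x\<in>Y. 8*(256*ds) < 2 * card {j\<in>{0..<8*(256*ds)}. hyp (vs!(u j)) x = c0 x}"
    using stepC[OF vcD ds Y(1,2) T0 hC good] by blast
  define V where "V j = vs!(u j)" for j
  have "\<forall>j<8*(256*ds). V j \<in> {0..<64*(3096*d)} \<rightarrow>\<^sub>E Y"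
  proof (intro allI impI)
    fix j assume "j < 8*(256*ds)"
    then have "u j < length vs" using u vs(1) by (auto simp: PiE_iff)
    then have "V j \<in> set vs" by (simp add: V_def)
    then show "V j \<in> {0..<64*(3096*d)} \<rightarrow>\<^sub>E Y" using vs(2) by (auto simp: VV_def s_def)
  qed
  moreover have "\<forall>x\<in>Y. 8*(256*ds) < 2 * card {j\<in>{0..<8*(256*ds)}. Hc C c0 (V j ` {0..<64*(3096*d)}) x = c0 x}"
    using maj by (simp add: V_def hyp_def s_def)
  ultimately show ?thesis by blast
qed

definition hypK :: "(nat \<Rightarrow> bool) set \<Rightarrow> (nat \<times> bool) multiset \<Rightarrow> nat set \<Rightarrow> (nat \<Rightarrow> bool)" where
  "hypK C K U = (SOME h. h \<in> C \<and> (\<forall>p\<in>#K. fst p \<in> U \<longrightarrow> h (fst p) = snd p))"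

lemma key_exists:
  fixes C :: "(nat \<Rightarrow> bool) set" and gg :: "nat \<Rightarrow> nat \<Rightarrow> nat"
  assumes vcC: "\<forall>Y. shatters X C Y \<longrightarrow> finite Y \<and> card Y \<le> d"
    and vcD: "\<forall>Y'. shatters C (dual_class X) Y' \<longrightarrow> finite Y' \<and> card Y' \<le> ds"
    and d: "1 \<le> d" and ds: "1 \<le> ds"
    and s_def: "s = 64*(3096*d)" and r_def: "r = 8*(256*ds)"
    and gg: "bij_betw gg {0..<card ({0..<r*s} \<rightarrow>\<^sub>E {0..<r*s})} ({0..<r*s} \<rightarrow>\<^sub>E {0..<r*s})"
    and S: "labeled_sample X C S"
  shows "\<exists>K i. K \<subseteq># S \<and> size K \<le> r*s \<and> i \<in> {0..<card ({0..<r*s} \<rightarrow>\<^sub>E {0..<r*s})} \<and>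
           (\<forall>p\<in>#S. (r < 2 * card {j\<in>{0..<r}. hypK C K ((\<lambda>l. sorted_list_of_set (fst ` set_mset K) ! (gg i (j*s+l))) ` {0..<s}) (fst p)}) = snd p)"
proof -
  define R where "R = r*s"
  define Fs where "Fs = {0..<R} \<rightarrow>\<^sub>E {0..<R}"
  have s0: "0 < s" and r0: "0 < r" using d ds by (auto simp: s_def r_def)
  have R0: "0 < R" using s0 r0 by (simp add: R_def)
  have cFs: "card Fs = R^R" by (simp add: Fs_def card_PiE)
  have cFs0: "0 < card Fs" using R0 by (simp add: cFs)
  obtain c0 where c0: "c0 \<in> C" "\<forall>p\<in>#S. c0 (fst p) = snd p" and SX: "\<forall>p\<in>#S. fst p \<in> X"
    using S by (auto simp: labeled_sample_def)
  define Y where "Y = fst ` set_mset S"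
  have finY: "finite Y" by (simp add: Y_def)
  have YX: "Y \<subseteq> X" using SX by (auto simp: Y_def)
  show ?thesis
  proof (cases "Y = {}")
    case True
    then have "S = {#}" by (simp add: Y_def)
    then show ?thesis using cFs0 by (intro exI[of _ "{#}"] exI[of _ 0]) (simp add: R_def Fs_def)
  next
    case False
    obtain V where V: "\<forall>j<r. V j \<in> {0..<s} \<rightarrow>\<^sub>E Y"
      and maj: "\<forall>x\<in>Y. r < 2 * card {j\<in>{0..<r}. Hc C c0 (V j ` {0..<s}) x = c0 x}"
      using main_exists[OF vcC vcD d ds c0(1) finY YX False] by (auto simp: s_def r_def)
    define U where "U j = V j ` {0..<s}" for j
    define W where "W = (\<Union>j\<in>{0..<r}. U j)"
    have UW: "U j \<subseteq> W" if "j < r" for j using that by (auto simp: W_def)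
    have WY: "W \<subseteq> Y" using V by (auto simp: W_def U_def PiE_iff)
    have finW: "finite W" using WY finY finite_subset by blast
    have cW: "card W \<le> R"
    proof -
      have "card W \<le> (\<Sum>j\<in>{0..<r}. card (U j))" unfolding W_def by (rule card_UN_le) simp
      also have "\<dots> \<le> (\<Sum>j\<in>{0..<r}. s)"
        by (intro sum_mono) (auto simp: U_def intro: card_image_le[THEN order_trans])
      finally show ?thesis by (simp add: R_def)
    qed
    define Kset where "Kset = (\<lambda>x. (x, c0 x)) ` W"
    define K where "K = mset_set Kset"
    have finK: "finite Kset" using finW by (simp add: Kset_def)
    have setK: "set_mset K = Kset" using finK by (simp add: K_def)
    have fstK: "fst ` set_mset K = W" by (simp add: setK Kset_def image_image)
    have KS: "K \<subseteq># S"
    proof -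
      have "Kset \<subseteq> set_mset S"
      proof
        fix q assume "q \<in> Kset"
        then obtain x where x: "x \<in> W" "q = (x, c0 x)" by (auto simp: Kset_def)
        then have "x \<in> Y" using WY by auto
        then obtain p where p: "p \<in># S" "fst p = x" by (auto simp: Y_def)
        have "snd p = c0 x" using c0(2) p by auto
        then have "p = (x, c0 x)" using p(2) by (cases p) auto
        then show "q \<in> set_mset S" using p x by simp
      qed
      then have "mset_set Kset \<subseteq># mset_set (set_mset S)"
        by (rule subset_imp_msubset_mset_set) simp
      also have "\<dots> \<subseteq># S" by (rule mset_set_set_mset_msubset)
      finally show ?thesis by (simp add: K_def)
    qed
    have sizeK: "size K \<le> R"
    proof -
      have "size K = card Kset" by (simp add: K_def)
      also have "\<dots> \<le> card W" unfolding Kset_def by (rule card_image_le[OF finW])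
      finally show ?thesis using cW by simp
    qed
    define xs where "xs = sorted_list_of_set W"
    have setxs: "set xs = W" using finW by (simp add: xs_def)
    have lenxs: "length xs = card W" by (simp add: xs_def)
    define f where "f p = (if p < R then (SOME i. i < length xs \<and> xs!i = V (p div s) (p mod s)) else undefined)" for p
    have fspec: "f p < length xs \<and> xs ! (f p) = V (p div s) (p mod s)" if p: "p < R" for p
    proof -
      have j: "p div s < r" using p by (simp add: R_def less_mult_imp_div_less)
      have l: "p mod s < s" using s0 by simp
      have "V (p div s) (p mod s) \<in> W" using UW[OF j] l by (auto simp: U_def)
      then have "\<exists>i. i < length xs \<and> xs!i = V (p div s) (p mod s)"
        unfolding setxs[symmetric] by (simp add: in_set_conv_nth)
      then obtain i0 where "i0 < length xs \<and> xs!i0 = V (p div s) (p mod s)" by blast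
      then have "(SOME i. i < length xs \<and> xs!i = V (p div s) (p mod s)) < length xs \<and>
          xs ! (SOME i. i < length xs \<and> xs!i = V (p div s) (p mod s)) = V (p div s) (p mod s)"
        by (rule someI[where P="\<lambda>i. i < length xs \<and> xs!i = V (p div s) (p mod s)"])
      then show ?thesis using p unfolding f_def by simp
    qed
    have fFs: "f \<in> Fs"
    proof -
      have "f p \<in> {0..<R}" if "p \<in> {0..<R}" for p using fspec[of p] that lenxs cW by auto
      moreover have "f p = undefined" if "p \<notin> {0..<R}" for p using that by (simp add: f_def)
      ultimately show ?thesis by (auto simp: Fs_def PiE_iff extensional_def)
    qed
    define i where "i = inv_into {0..<card Fs} gg f"
    have gg': "bij_betw gg {0..<card Fs} Fs" using gg by (simp add: Fs_def R_def)
    have iI: "i \<in> {0..<card Fs}" using fFs gg' unfolding i_def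
      by (metis bij_betw_def inv_into_into)
    have ggi: "gg i = f" using fFs gg' unfolding i_def by (simp add: bij_betw_inv_into_right)
    have Ueq: "(\<lambda>l. sorted_list_of_set (fst ` set_mset K) ! (gg i (j*s+l))) ` {0..<s} = U j" if j: "j < r" for j
    proof -
      have "sorted_list_of_set (fst ` set_mset K) ! (gg i (j*s+l)) = V j l" if l: "l < s" for l
      proof -
        have lt: "j*s + l < R"
        proof -
          have "j*s + l < j*s + s" using l by simp
          also have "\<dots> = (j+1)*s" by simp
          also have "\<dots> \<le> r*s" using j by (intro mult_right_mono) auto
          finally show ?thesis by (simp add: R_def)
        qed
        have dm: "(j*s+l) div s = j" "(j*s+l) mod s = l" using l s0 by auto
        show ?thesis using fspec[OF lt] dm by (simp add: fstK xs_def[symmetric] ggi)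
      qed
      then show ?thesis by (auto simp: U_def image_def)
    qed
    have hypeq: "hypK C K (U j) = Hc C c0 (U j)" if j: "j < r" for j
    proof -
      have "(\<lambda>h. h \<in> C \<and> (\<forall>p\<in>#K. fst p \<in> U j \<longrightarrow> h (fst p) = snd p)) = (\<lambda>h. h \<in> C \<and> (\<forall>x\<in>U j. h x = c0 x))"
        using UW[OF j] by (auto simp: setK Kset_def fun_eq_iff)
      then show ?thesis by (simp add: hypK_def Hc_def)
    qed
    have corr: "(r < 2 * card {j\<in>{0..<r}. hypK C K ((\<lambda>l. sorted_list_of_set (fst ` set_mset K) ! (gg i (j*s+l))) ` {0..<s}) (fst p)}) = snd p"
      if p: "p \<in># S" for p
    proof -
      define x where "x = fst p"
      have xY: "x \<in> Y" using p by (auto simp: Y_def x_def)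
      have sp: "snd p = c0 x" using c0(2) p by (simp add: x_def)
      have seteq: "{j\<in>{0..<r}. hypK C K ((\<lambda>l. sorted_list_of_set (fst ` set_mset K) ! (gg i (j*s+l))) ` {0..<s}) x}
          = {j\<in>{0..<r}. Hc C c0 (U j) x}"
        using Ueq hypeq by auto
      have m: "r < 2 * card {j\<in>{0..<r}. Hc C c0 (U j) x = c0 x}" using maj xY by (simp add: U_def)
      show ?thesis
      proof (cases "c0 x")
        case True
        then have "{j\<in>{0..<r}. Hc C c0 (U j) x} = {j\<in>{0..<r}. Hc C c0 (U j) x = c0 x}" by auto
        then show ?thesis using m seteq sp True by (simp add: x_def)
      next
        case False
        have "card {j\<in>{0..<r}. Hc C c0 (U j) x = c0 x} + card {j\<in>{0..<r}. \<not> Hc C c0 (U j) x = c0 x} = card {0..<r}"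
          by (rule card_split) simp
        moreover have "{j\<in>{0..<r}. \<not> Hc C c0 (U j) x = c0 x} = {j\<in>{0..<r}. Hc C c0 (U j) x}" using False by auto
        ultimately have "card {j\<in>{0..<r}. Hc C c0 (U j) x} + card {j\<in>{0..<r}. Hc C c0 (U j) x = c0 x} = r" by simp
        then have "\<not> r < 2 * card {j\<in>{0..<r}. Hc C c0 (U j) x}" using m by linarith
        then show ?thesis using seteq sp False by (simp add: x_def)
      qed
    qed
    show ?thesis
      using KS sizeK iI corr by (intro exI[of _ K] exI[of _ i]) (simp add: R_def Fs_def)
  qed
qed


theorem theorem4:
  shows "\<exists>a::real. a > 0 \<and>
    (\<forall>(X::nat set) (C::(nat \<Rightarrow> bool) set) (d::nat) (ds::nat).
       (\<forall>c\<in>C. \<forall>x. x \<notin> X \<longrightarrow> \<not> c x) \<and>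
       has_vc_dim X C d \<and> 0 < d \<and>
       has_vc_dim C (dual_class X) ds \<and> 0 < ds \<longrightarrow>
       (\<exists>(k::nat) (I::nat set) \<kappa> \<rho>.
          compression_scheme X C k I \<kappa> \<rho> \<and> I \<noteq> {} \<and>
          real k + log 2 (real (card I))
            \<le> (a * real ds * real d) * log 2 (a * real ds * real d)))"
proof -
  have main: "\<exists>(k::nat) (I::nat set) \<kappa> \<rho>.
          compression_scheme X C k I \<kappa> \<rho> \<and> I \<noteq> {} \<and>
          real k + log 2 (real (card I))
            \<le> (811597824 * real ds * real d) * log 2 (811597824 * real ds * real d)"
    if H: "(\<forall>c\<in>C. \<forall>x. x \<notin> X \<longrightarrow> \<not> c x) \<and> has_vc_dim X C d \<and> 0 < d \<and>
       has_vc_dim C (dual_class X) ds \<and> 0 < ds"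
    for X :: "nat set" and C :: "(nat \<Rightarrow> bool) set" and d ds :: nat
  proof -
  have vcC: "\<forall>Y. shatters X C Y \<longrightarrow> finite Y \<and> card Y \<le> d" using H by (simp add: has_vc_dim_def)
  have vcD: "\<forall>Y'. shatters C (dual_class X) Y' \<longrightarrow> finite Y' \<and> card Y' \<le> ds" using H by (simp add: has_vc_dim_def)
  have d: "1 \<le> d" and ds: "1 \<le> ds" using H by auto
  define s where "s = 64*(3096*d)"
  define r where "r = 8*(256*ds)"
  define R where "R = r*s"
  define Fs where "Fs = {0..<R} \<rightarrow>\<^sub>E {0..<R}"
  have R0: "1 \<le> R" using d ds by (simp add: R_def r_def s_def)
  have cFs: "card Fs = R^R" by (simp add: Fs_def card_PiE)
  obtain gg where gg: "bij_betw gg {0..<card Fs} Fs"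
    using ex_bij_betw_nat_finite[of Fs] by (auto simp: Fs_def finite_PiE)
  define I where "I = {0..<card Fs}"
  define \<rho> where "\<rho> K i x = (r < 2 * card {j\<in>{0..<r}. hypK C K ((\<lambda>l. sorted_list_of_set (fst ` set_mset K) ! (gg i (j*s+l))) ` {0..<s}) x})"
    for K i x
  define good where "good S K i \<longleftrightarrow> K \<subseteq># S \<and> size K \<le> R \<and> i \<in> I \<and> (\<forall>p\<in>#S. \<rho> K i (fst p) = snd p)"
    for S K i
  define \<kappa> where "\<kappa> S = (SOME Ki. good S (fst Ki) (snd Ki))" for S
  have key: "\<exists>K i. good S K i" if S: "labeled_sample X C S" for S
    using key_exists[OF vcC vcD d ds s_def r_def _ S, of gg] gg
    unfolding good_def \<rho>_def I_def Fs_def R_def by auto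
  have cs: "compression_scheme X C R I \<kappa> \<rho>"
    unfolding compression_scheme_def
  proof (rule conjI)
    show "finite I" by (simp add: I_def)
  next
    show "\<forall>S. labeled_sample X C S \<longrightarrow> fst (\<kappa> S) \<subseteq># S \<and> size (fst (\<kappa> S)) \<le> R \<and> snd (\<kappa> S) \<in> I \<and>
        (\<forall>p\<in>#S. \<rho> (fst (\<kappa> S)) (snd (\<kappa> S)) (fst p) = snd p)"
  proof (intro allI impI)
    fix S assume S: "labeled_sample X C S"
    then obtain K i where "good S K i" using key by blast
    then have "good S (fst (K, i)) (snd (K, i))" by simp
    then have g: "good S (fst (\<kappa> S)) (snd (\<kappa> S))"
      unfolding \<kappa>_def by (rule someI[where P="\<lambda>Ki. good S (fst Ki) (snd Ki)"])
    then show "fst (\<kappa> S) \<subseteq># S \<and> size (fst (\<kappa> S)) \<le> R \<and> snd (\<kappa> S) \<in> I \<and>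
        (\<forall>p\<in>#S. \<rho> (fst (\<kappa> S)) (snd (\<kappa> S)) (fst p) = snd p)"
      by (simp add: good_def)
  qed
  qed
  have cI: "card I = R^R" by (simp add: I_def cFs)
  have Ine: "I \<noteq> {}" using R0 by (simp add: I_def cFs)
  have RR: "811597824 * real ds * real d = 2 * real R" by (simp add: R_def r_def s_def)
  define L where "L = log 2 (real R)"
  have L0: "0 \<le> L" using R0 by (simp add: L_def)
  have "real R + log 2 (real (card I)) = real R * (1 + L)"
    by (simp add: cI L_def log_nat_power algebra_simps)
  also have "\<dots> \<le> 2 * real R * (1 + L)" using L0 by simp
  also have "\<dots> = (2 * real R) * log 2 (2 * real R)"
    using R0 by (simp add: L_def log_mult)
  finally have "real R + log 2 (real (card I)) \<le> (811597824 * real ds * real d) * log 2 (811597824 * real ds * real d)"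
    unfolding RR .
  then show ?thesis using cs Ine by blast
  qed
  show ?thesis
    by (rule exI[of _ "811597824"], intro conjI allI impI) (simp, rule main, assumption)
qed

end
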